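(* Let $P$ be a finite semipure poset of length $n$ and $t\ge 1$ an integer. For a maximal chain $C=\{x_0<x_1<\dots<x_m\}$ of $P$ and $d=(d_1,\dots,d_m)\in\{0,1\}^m$, let $[C,d]$ be the set of maximal chains $\{\hat 0<(x_0,f_0)<(x_1,f_1)<\dots<(x_m,f_m)<\hat 1\}$ of $\widehat{P*T_{t,n}}$ with $r(f_i)-r(f_{i-1})=d_i$ for all $i\in[m]$. Then, as $C$ ranges over the maximal chains of $P$ (of any length $m$) and $d$ ranges over $\{0,1\}^m$, the sets $[C,d]$ partition the set of maximal chains of $\widehat{P*T_{t,n}}$, and $|[C,d]|=t^{\,d_1+\dots+d_m}$.
   Context: All posets are finite. A poset $P$ is semipure if for every $x\in P$ all maximal chains of $P_{\le x}$ have the same length, the rank $r_P(x)$. For semipure $P,Q$, the Rees product $P*Q$ is $\{(p,q)\in P\times Q: r_P(p)\ge r_Q(q)\}$ with $(p_1,q_1)\le(p_2,q_2)$ iff $p_1\le p_2$, $q_1\le q_2$, and $r_P(p_2)-r_P(p_1)\ge r_Q(q_2)-r_Q(q_1)$. $T_{t,n}$ is the poset of all sequences of elements of $\{1,\dots,t\}$ of length at most $n$ (including the empty sequence, its minimum $\hat 0_T$), ordered by ``is a prefix of''; its Hasse diagram is a complete $t$-ary tree of height $n$ rooted at the bottom, and $r(f)$ is the length of the sequence $f$. $\hat Q$ denotes $Q$ with a new minimum $\hat 0$ and new maximum $\hat 1$ adjoined. *)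

theory Defs
  imports Main "HOL-Library.Sublist"
begin

definition is_poset :: "'a set \<Rightarrow> ('a \<Rightarrow> 'a \<Rightarrow> bool) \<Rightarrow> bool" where
  "is_poset A le \<longleftrightarrow>
     (\<forall>x\<in>A. le x x) \<and>
     (\<forall>x\<in>A. \<forall>y\<in>A. le x y \<and> le y x \<longrightarrow> x = y) \<and>
     (\<forall>x\<in>A. \<forall>y\<in>A. \<forall>z\<in>A. le x y \<and> le y z \<longrightarrow> le x z)"

definition is_chain :: "'a set \<Rightarrow> ('a \<Rightarrow> 'a \<Rightarrow> bool) \<Rightarrow> 'a set \<Rightarrow> bool" where
  "is_chain A le C \<longleftrightarrow> C \<subseteq> A \<and> (\<forall>x\<in>C. \<forall>y\<in>C. le x y \<or> le y x)"

definition is_maximal_chain :: "'a set \<Rightarrow> ('a \<Rightarrow> 'a \<Rightarrow> bool) \<Rightarrow> 'a set \<Rightarrow> bool" where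
  "is_maximal_chain A le C \<longleftrightarrow>
     is_chain A le C \<and> (\<forall>D. is_chain A le D \<and> C \<subseteq> D \<longrightarrow> D = C)"

definition maxchain_list :: "'a set \<Rightarrow> ('a \<Rightarrow> 'a \<Rightarrow> bool) \<Rightarrow> 'a list \<Rightarrow> bool" where
  "maxchain_list A le xs \<longleftrightarrow>
     sorted_wrt (\<lambda>x y. le x y \<and> x \<noteq> y) xs \<and> is_maximal_chain A le (set xs)"

definition down_set :: "'a set \<Rightarrow> ('a \<Rightarrow> 'a \<Rightarrow> bool) \<Rightarrow> 'a \<Rightarrow> 'a set" where
  "down_set A le x = {y\<in>A. le y x}"

definition semipure :: "'a set \<Rightarrow> ('a \<Rightarrow> 'a \<Rightarrow> bool) \<Rightarrow> bool" where
  "semipure A le \<longleftrightarrow>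
     (\<forall>x\<in>A. \<forall>C1 C2. is_maximal_chain (down_set A le x) le C1 \<and>
                      is_maximal_chain (down_set A le x) le C2 \<longrightarrow> card C1 = card C2)"

text \<open>Rank: the length (number of elements minus one) of the maximal chains of P_{<= x}
  (well defined for semipure posets).\<close>
definition rank :: "'a set \<Rightarrow> ('a \<Rightarrow> 'a \<Rightarrow> bool) \<Rightarrow> 'a \<Rightarrow> nat" where
  "rank A le x = Max {card C - 1 | C. is_maximal_chain (down_set A le x) le C}"

definition poset_length :: "'a set \<Rightarrow> ('a \<Rightarrow> 'a \<Rightarrow> bool) \<Rightarrow> nat \<Rightarrow> bool" where
  "poset_length A le n \<longleftrightarrow>
     (\<exists>C. is_chain A le C \<and> card C = n + 1) \<and> (\<forall>C. is_chain A le C \<longrightarrow> card C \<le> n + 1)"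

definition rees_carrier ::
  "'a set \<Rightarrow> ('a \<Rightarrow> 'a \<Rightarrow> bool) \<Rightarrow> 'b set \<Rightarrow> ('b \<Rightarrow> 'b \<Rightarrow> bool) \<Rightarrow> ('a \<times> 'b) set" where
  "rees_carrier A leA B leB = {(p, q). p \<in> A \<and> q \<in> B \<and> rank B leB q \<le> rank A leA p}"

definition rees_le ::
  "'a set \<Rightarrow> ('a \<Rightarrow> 'a \<Rightarrow> bool) \<Rightarrow> 'b set \<Rightarrow> ('b \<Rightarrow> 'b \<Rightarrow> bool) \<Rightarrow> ('a \<times> 'b) \<Rightarrow> ('a \<times> 'b) \<Rightarrow> bool" where
  "rees_le A leA B leB u v \<longleftrightarrow>
     leA (fst u) (fst v) \<and> leB (snd u) (snd v) \<and>
     int (rank A leA (fst v)) - int (rank A leA (fst u)) \<ge>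
     int (rank B leB (snd v)) - int (rank B leB (snd u))"

text \<open>The complete t-ary tree T_{t,n}: sequences over {1..t} of length at most n,
  ordered by the prefix relation.\<close>
definition tree_T :: "nat \<Rightarrow> nat \<Rightarrow> nat list set" where
  "tree_T t n = {f. set f \<subseteq> {1..t} \<and> length f \<le> n}"

datatype 'a hat = Bot | Elem 'a | Top

definition hat_carrier :: "'a set \<Rightarrow> 'a hat set" where
  "hat_carrier A = {Bot, Top} \<union> Elem ` A"

fun hat_le :: "('a \<Rightarrow> 'a \<Rightarrow> bool) \<Rightarrow> 'a hat \<Rightarrow> 'a hat \<Rightarrow> bool" where
  "hat_le le Bot y = True"
| "hat_le le (Elem a) Bot = False"
| "hat_le le (Elem a) (Elem b) = le a b"
| "hat_le le (Elem a) Top = True"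
| "hat_le le Top y = (y = Top)"

text \<open>The set [C,d] of maximal chains of the hat of P * T_{t,n}, where C is a maximal chain
  x_0 < ... < x_m of P (as an increasing list) and d = (d_1,...,d_m) is a list of length m.\<close>
definition block ::
  "'a set \<Rightarrow> ('a \<Rightarrow> 'a \<Rightarrow> bool) \<Rightarrow> nat \<Rightarrow> nat \<Rightarrow> 'a list \<Rightarrow> nat list \<Rightarrow> ('a \<times> nat list) hat list set" where
  "block A le t n C d =
     {ys. maxchain_list (hat_carrier (rees_carrier A le (tree_T t n) prefix))
                        (hat_le (rees_le A le (tree_T t n) prefix)) ys \<and>
          (\<exists>fs. length fs = length C \<and>
                ys = [Bot] @ map Elem (zip C fs) @ [Top] \<and>
                (\<forall>i\<in>{1..<length C}. int (length (fs ! i)) - int (length (fs ! (i - 1))) = int (d ! (i - 1))))}"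

end

theory Submission imports Defs begin

lemma sw_distinct: "sorted_wrt (\<lambda>x y. R x y \<and> x \<noteq> y) xs \<Longrightarrow> distinct xs"
  by (induction xs) auto

lemma extend_maxchain:
  assumes "finite A" "is_chain A le X"
  shows "\<exists>D. is_maximal_chain A le D \<and> X \<subseteq> D"
proof -
  have "\<exists>D. (is_chain A le D \<and> X \<subseteq> D) \<and> (\<forall>D'. is_chain A le D' \<and> X \<subseteq> D' \<longrightarrow> card D' \<le> card D)"
  proof (rule ex_has_greatest_nat[where b="card A + 1" and f=card])
    show "is_chain A le X \<and> X \<subseteq> X" using assms by auto
    show "\<forall>y. is_chain A le y \<and> X \<subseteq> y \<longrightarrow> card y < card A + 1"
      using assms(1) by (auto simp: is_chain_def intro: card_mono le_imp_less_Suc)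
  qed
  then obtain D where D: "is_chain A le D" "X \<subseteq> D"
    and mx: "\<And>D'. is_chain A le D' \<Longrightarrow> X \<subseteq> D' \<Longrightarrow> card D' \<le> card D" by blast
  have "is_maximal_chain A le D"
    unfolding is_maximal_chain_def
  proof (intro conjI allI impI)
    show "is_chain A le D" by fact
    fix D' assume h: "is_chain A le D' \<and> D \<subseteq> D'"
    then have "finite D'" using assms(1) by (auto simp: is_chain_def intro: finite_subset)
    moreover have "card D' \<le> card D" using mx h D by blast
    ultimately show "D' = D" using h card_subset_eq by (metis antisym card_mono)
  qed
  then show ?thesis using D by blast
qed

context
  fixes A :: "'a set" and le :: "'a \<Rightarrow> 'a \<Rightarrow> bool"
  assumes fin: "finite A" and po: "is_poset A le" and sp: "semipure A le"
begin

lemma prefl: "x \<in> A \<Longrightarrow> le x x" using po unfolding is_poset_def by blast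
lemma pantisym: "x \<in> A \<Longrightarrow> y \<in> A \<Longrightarrow> le x y \<Longrightarrow> le y x \<Longrightarrow> x = y"
  using po unfolding is_poset_def by blast
lemma ptrans: "x \<in> A \<Longrightarrow> y \<in> A \<Longrightarrow> z \<in> A \<Longrightarrow> le x y \<Longrightarrow> le y z \<Longrightarrow> le x z"
  using po unfolding is_poset_def by blast

lemma rank_maxchain:
  assumes D: "is_maximal_chain A le D" and x: "x \<in> D"
  shows "rank A le x = card {y\<in>D. le y x} - 1"
proof -
  let ?M = "{y\<in>D. le y x}"
  have DA: "D \<subseteq> A" and Dc: "\<forall>a\<in>D. \<forall>b\<in>D. le a b \<or> le b a"
    using D by (auto simp: is_maximal_chain_def is_chain_def)
  have xA: "x \<in> A" using DA x by auto
  have Mmax: "is_maximal_chain (down_set A le x) le ?M"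
    unfolding is_maximal_chain_def
  proof (intro conjI allI impI)
    show "is_chain (down_set A le x) le ?M"
      using DA Dc by (auto simp: is_chain_def down_set_def)
    fix D' assume h: "is_chain (down_set A le x) le D' \<and> ?M \<subseteq> D'"
    have D'A: "D' \<subseteq> A" and D'x: "\<forall>a\<in>D'. le a x" and D'c: "\<forall>a\<in>D'. \<forall>b\<in>D'. le a b \<or> le b a"
      using h by (auto simp: is_chain_def down_set_def)
    have "is_chain A le (D' \<union> D)"
      unfolding is_chain_def
    proof (intro conjI)
      show "D' \<union> D \<subseteq> A" using D'A DA by auto
      have cross: "le a b \<or> le b a" if a: "a \<in> D'" and b: "b \<in> D" for a b
      proof (cases "le b x")
        case True
        then have "b \<in> D'" using h b by auto
        then show ?thesis using D'c a by auto
      next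
        case False
        then have "le x b" using Dc x b by auto
        then have "le a b" using ptrans[of a x b] D'x a D'A DA b xA by blast
        then show ?thesis by simp
      qed
      show "\<forall>a\<in>D' \<union> D. \<forall>b\<in>D' \<union> D. le a b \<or> le b a"
        using cross D'c Dc by blast
    qed
    then have "D' \<union> D = D" using D unfolding is_maximal_chain_def by blast
    then have "D' \<subseteq> D" by blast
    then show "D' = ?M" using h D'x by auto
  qed
  have "{card C - 1 | C. is_maximal_chain (down_set A le x) le C} = {card ?M - 1}"
  proof -
    have ce: "card C = card ?M" if "is_maximal_chain (down_set A le x) le C" for C
      using bspec[OF sp[unfolded semipure_def] xA] that Mmax by blast
    show ?thesis
    proof
      show "{card C - 1 | C. is_maximal_chain (down_set A le x) le C} \<subseteq> {card ?M - 1}"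
      proof (rule subsetI)
        fix c assume "c \<in> {card C - 1 | C. is_maximal_chain (down_set A le x) le C}"
        then obtain C where "c = card C - 1" "is_maximal_chain (down_set A le x) le C" by blast
        then show "c \<in> {card ?M - 1}" using ce by simp
      qed
      show "{card ?M - 1} \<subseteq> {card C - 1 | C. is_maximal_chain (down_set A le x) le C}"
        using Mmax by blast
    qed
  qed
  then show ?thesis unfolding rank_def by simp
qed

lemma rank_strict:
  assumes D: "is_maximal_chain A le D" and u: "u \<in> D" and v: "v \<in> D"
    and uv: "le u v" "u \<noteq> v"
  shows "rank A le u < rank A le v"
proof -
  have DA: "D \<subseteq> A" using D by (auto simp: is_maximal_chain_def is_chain_def)
  have fD: "finite D" using DA fin finite_subset by blast
  have sub: "{y\<in>D. le y u} \<subset> {y\<in>D. le y v}"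
  proof
    show "{y\<in>D. le y u} \<subseteq> {y\<in>D. le y v}"
    proof
      fix y assume "y \<in> {y\<in>D. le y u}"
      then show "y \<in> {y\<in>D. le y v}" using ptrans[of y u v] DA u v uv by auto
    qed
    have "\<not> le v u" using pantisym[of u v] DA u v uv by blast
    moreover have "le v v" using prefl DA v by blast
    ultimately show "{y\<in>D. le y u} \<noteq> {y\<in>D. le y v}" using v by blast
  qed
  then have "card {y\<in>D. le y u} < card {y\<in>D. le y v}"
    using fD by (intro psubset_card_mono) auto
  moreover have "card {y\<in>D. le y u} \<ge> 1"
  proof -
    have "u \<in> {y\<in>D. le y u}" using prefl DA u by blast
    moreover have "finite {y\<in>D. le y u}" using fD by auto
    ultimately show ?thesis by (metis One_nat_def Suc_leI card_gt_0_iff empty_iff)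
  qed
  ultimately show ?thesis using rank_maxchain[OF D u] rank_maxchain[OF D v] by simp
qed

lemma rank_le_n:
  assumes pl: "poset_length A le n" and D: "is_maximal_chain A le D" and x: "x \<in> D"
  shows "rank A le x \<le> n"
proof -
  have "card D \<le> n + 1" using pl D unfolding poset_length_def is_maximal_chain_def by blast
  moreover have "card {y\<in>D. le y x} \<le> card D"
    using D fin by (intro card_mono) (auto simp: is_maximal_chain_def is_chain_def intro: finite_subset)
  ultimately show ?thesis using rank_maxchain[OF D x] by simp
qed

lemma rank_list:
  assumes C: "maxchain_list A le C" and i: "i < length C"
  shows "rank A le (C!i) = i"
proof -
  have s: "sorted_wrt (\<lambda>x y. le x y \<and> x \<noteq> y) C" and M: "is_maximal_chain A le (set C)"
    using C by (auto simp: maxchain_list_def)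
  have CA: "set C \<subseteq> A" using M by (auto simp: is_maximal_chain_def is_chain_def)
  have dC: "distinct C" using sw_distinct[OF s] .
  have "{y\<in>set C. le y (C!i)} = set (take (Suc i) C)"
  proof (rule set_eqI, rule iffI)
    fix y assume "y \<in> {y\<in>set C. le y (C!i)}"
    then obtain j where j: "j < length C" "y = C!j" "le (C!j) (C!i)" by (auto simp: in_set_conv_nth)
    have "j \<le> i"
    proof (rule ccontr)
      assume "\<not> j \<le> i"
      then have "le (C!i) (C!j)" "C!i \<noteq> C!j" using s j i by (auto simp: sorted_wrt_iff_nth_less)
      moreover have "C!i \<in> A" "C!j \<in> A" using CA i j by auto
      ultimately show False using pantisym j by blast
    qed
    then show "y \<in> set (take (Suc i) C)" using j by (auto simp: in_set_conv_nth)
  next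
    fix y assume "y \<in> set (take (Suc i) C)"
    then obtain j where j: "j \<le> i" "y = C!j" using i by (fastforce simp: in_set_conv_nth less_Suc_eq_le)
    have "le (C!j) (C!i)"
    proof (cases "j = i")
      case True then show ?thesis using prefl CA i by (simp add: subset_iff)
    next
      case False then show ?thesis using s j i by (auto simp: sorted_wrt_iff_nth_less)
    qed
    then show "y \<in> {y\<in>set C. le y (C!i)}" using j i by auto
  qed
  moreover have "card (set (take (Suc i) C)) = Suc i"
    using dC i by (simp add: distinct_card)
  moreover have "C!i \<in> set C" using i by simp
  ultimately show ?thesis using rank_maxchain[OF M] by simp
qed

end

lemma rank_T:
  assumes q: "q \<in> tree_T t n"
  shows "rank (tree_T t n) prefix q = length q"
proof -
  let ?P = "{p. prefix p q}"
  have ds: "down_set (tree_T t n) prefix q = ?P"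
    using q by (auto simp: down_set_def tree_T_def dest: prefix_length_le set_mono_prefix)
  have ch: "is_chain ?P prefix ?P"
  proof -
    have "\<forall>x\<in>?P. \<forall>y\<in>?P. prefix x y \<or> prefix y x" using prefix_same_cases by blast
    then show ?thesis by (simp add: is_chain_def)
  qed
  have "{card C - 1 | C. is_maximal_chain ?P prefix C} = {card ?P - 1}"
  proof -
    have "C = ?P" if "is_maximal_chain ?P prefix C" for C
      using that ch unfolding is_maximal_chain_def is_chain_def by blast
    moreover have "is_maximal_chain ?P prefix ?P" using ch by (auto simp: is_maximal_chain_def is_chain_def)
    ultimately show ?thesis by auto
  qed
  moreover have "card ?P = Suc (length q)"
    using card_set_prefixes[of q] by (simp add: in_set_prefixes[symmetric] del: in_set_prefixes)
  ultimately show ?thesis unfolding rank_def ds by simp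
qed


lemma prefix_take_mono: "prefix f L \<Longrightarrow> length f \<le> k \<Longrightarrow> prefix f (take k L)"
  by (auto simp: prefix_def)

lemma take_prefix_eq: "prefix f L \<Longrightarrow> k \<le> length f \<Longrightarrow> take k L = take k f"
  by (auto simp: prefix_def)

lemma sorted_cmp: "sorted_wrt R xs \<Longrightarrow> a \<in> set xs \<Longrightarrow> b \<in> set xs \<Longrightarrow> a \<noteq> b \<Longrightarrow> R a b \<or> R b a"
  by (metis in_set_conv_nth linorder_neqE_nat sorted_wrt_nth_less)

lemma sorted_chain:
  assumes "sorted_wrt (\<lambda>x y. R x y \<and> x \<noteq> y) xs" "set xs \<subseteq> A" "\<forall>x\<in>A. R x x"
  shows "is_chain A R (set xs)"
  using assms sorted_cmp[OF assms(1)] unfolding is_chain_def by blast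

fun unE :: "'a hat \<Rightarrow> 'a" where "unE (Elem a) = a" | "unE _ = undefined"

lemma hat_form:
  assumes ys: "maxchain_list (hat_carrier Q) (hat_le leQ) ys"
  shows "\<exists>zs. ys = [Bot] @ map Elem zs @ [Top] \<and> sorted_wrt (\<lambda>x y. leQ x y \<and> x \<noteq> y) zs \<and> set zs \<subseteq> Q"
proof -
  have s: "sorted_wrt (\<lambda>x y. hat_le leQ x y \<and> x \<noteq> y) ys" and M: "is_maximal_chain (hat_carrier Q) (hat_le leQ) (set ys)"
    using ys by (auto simp: maxchain_list_def)
  have sH: "set ys \<subseteq> hat_carrier Q" and cc: "\<forall>x\<in>set ys. \<forall>y\<in>set ys. hat_le leQ x y \<or> hat_le leQ y x"
    using M by (auto simp: is_maximal_chain_def is_chain_def)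
  have topI: "hat_le leQ y Top" for y by (cases y) auto
  have "is_chain (hat_carrier Q) (hat_le leQ) (insert Bot (set ys))"
    using sH cc by (auto simp: is_chain_def hat_carrier_def)
  then have Bin: "Bot \<in> set ys" using M unfolding is_maximal_chain_def by blast
  have "is_chain (hat_carrier Q) (hat_le leQ) (insert Top (set ys))"
    using sH cc topI by (auto simp: is_chain_def hat_carrier_def)
  then have Tin: "Top \<in> set ys" using M unfolding is_maximal_chain_def by blast
  obtain a r where ar: "ys = a # r" using Bin by (cases ys) auto
  have "a = Bot"
  proof (rule ccontr)
    assume "a \<noteq> Bot"
    then have "Bot \<in> set r" using Bin ar by auto
    then have "hat_le leQ a Bot" "a \<noteq> Bot" using s ar by auto
    then show False by (cases a) auto
  qed
  have Tr: "Top \<in> set r" using Tin ar \<open>a = Bot\<close> by auto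
  then have "r \<noteq> []" by auto
  then obtain mid b where mb: "r = mid @ [b]" by (metis rev_exhaust)
  have sr: "sorted_wrt (\<lambda>x y. hat_le leQ x y \<and> x \<noteq> y) (mid @ [b])"
  proof -
    have "sorted_wrt (\<lambda>x y. hat_le leQ x y \<and> x \<noteq> y) (a # (mid @ [b]))" using s ar mb by simp
    then show ?thesis by (rule sorted_wrt.elims) auto
  qed
  have "b = Top"
  proof (rule ccontr)
    assume "b \<noteq> Top"
    then have "Top \<in> set mid" using Tr mb by auto
    then have "hat_le leQ Top b" "Top \<noteq> b" using sr by (auto simp: sorted_wrt_append)
    then show False by (cases b) auto
  qed
  have midE: "\<forall>x\<in>set mid. \<exists>u. x = Elem u"
  proof
    fix x assume x: "x \<in> set mid"
    then have "x \<noteq> Bot" using s ar mb \<open>a = Bot\<close> by auto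
    moreover have "x \<noteq> Top" using sr x \<open>b = Top\<close> by (auto simp: sorted_wrt_append)
    ultimately show "\<exists>u. x = Elem u" by (cases x) auto
  qed
  define zs where "zs = map unE mid"
  have mz: "mid = map Elem zs" unfolding zs_def using midE
    by (induction mid) auto
  have "sorted_wrt (\<lambda>x y. leQ x y \<and> x \<noteq> y) zs"
    using sr mz by (auto simp: sorted_wrt_append sorted_wrt_map)
  moreover have "set zs \<subseteq> Q" using sH ar mb mz by (auto simp: hat_carrier_def)
  ultimately show ?thesis using ar mb mz \<open>a = Bot\<close> \<open>b = Top\<close> by auto
qed

lemma samefst:
  assumes "rees_le A le (tree_T t n) prefix u v" "snd u \<in> tree_T t n" "snd v \<in> tree_T t n" "fst u = fst v"
  shows "u = v"
proof -
  have "prefix (snd u) (snd v)" "length (snd v) \<le> length (snd u)"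
    using assms by (auto simp: rees_le_def rank_T)
  then have "snd u = snd v" by (auto simp: prefix_def)
  then show ?thesis using assms(4) by (simp add: prod_eq_iff)
qed


definition sseq :: "nat list \<Rightarrow> nat \<Rightarrow> nat" where "sseq d i = sum_list (take i d)"
definition fsq :: "nat list \<Rightarrow> nat \<Rightarrow> nat list \<Rightarrow> nat list list" where
  "fsq d m g = map (\<lambda>i. take (sseq d i) g) [0..<m]"
definition mkch :: "'a list \<Rightarrow> nat list \<Rightarrow> nat list \<Rightarrow> ('a \<times> nat list) hat list" where
  "mkch C d g = [Bot] @ map Elem (zip C (fsq d (length C) g)) @ [Top]"

lemma sseq_Suc: "i < length d \<Longrightarrow> sseq d (Suc i) = sseq d i + d!i"
  by (simp add: sseq_def take_Suc_conv_app_nth)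

lemma sseq_all: "length d \<le> i \<Longrightarrow> sseq d i = sum_list d"
  by (simp add: sseq_def)

lemma sseq_mono: "set d \<subseteq> {0,1} \<Longrightarrow> i \<le> j \<Longrightarrow> sseq d i \<le> sseq d j \<and> sseq d j \<le> sseq d i + (j - i)"
proof (induction j)
  case 0 then show ?case by simp
next
  case (Suc j)
  show ?case
  proof (cases "i = Suc j")
    case True then show ?thesis by simp
  next
    case False
    then have ij: "i \<le> j" using Suc by simp
    have st: "sseq d (Suc j) = sseq d j + (if j < length d then d!j else 0)"
      by (cases "j < length d") (auto simp: sseq_Suc sseq_all)
    have "j < length d \<Longrightarrow> d!j \<le> 1" using Suc.prems(1) nth_mem by fastforce
    then show ?thesis using Suc.IH[OF Suc.prems(1) ij] st ij by auto
  qed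
qed

lemma sseq_le_sum: "sseq d i \<le> sum_list d"
  by (simp add: sseq_def) (metis append_take_drop_id le_add1 sum_list_append)

lemma sseq_le: "set d \<subseteq> {0,1} \<Longrightarrow> sseq d i \<le> i"
  using sseq_mono[of d 0 i] by (simp add: sseq_def)

lemma prefix_take_take: "i \<le> j \<Longrightarrow> prefix (take i xs) (take j xs)"
  by (metis min.absorb1 take_is_prefix take_take)

lemma int_diff_ge: "int (a - b) \<ge> int a - int b" by simp

context
  fixes A :: "'a set" and le :: "'a \<Rightarrow> 'a \<Rightarrow> bool" and t n :: nat
  assumes fin: "finite A" and po: "is_poset A le" and sp: "semipure A le"
    and pl: "poset_length A le n" and t1: "t \<ge> 1"
begin

lemma struct_A:
  assumes ys: "maxchain_list (hat_carrier (rees_carrier A le (tree_T t n) prefix))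
                 (hat_le (rees_le A le (tree_T t n) prefix)) ys"
  shows "\<exists>C fs. length fs = length C \<and> ys = [Bot] @ map Elem (zip C fs) @ [Top] \<and> maxchain_list A le C
     \<and> (\<forall>i. Suc i < length C \<longrightarrow> prefix (fs!i) (fs!Suc i) \<and> length (fs!Suc i) \<le> Suc (length (fs!i)))"
proof -
  let ?T = "tree_T t n"
  let ?Q = "rees_carrier A le ?T prefix"
  let ?leQ = "rees_le A le ?T prefix"
  obtain zs where ys_eq: "ys = [Bot] @ map Elem zs @ [Top]"
    and zs_s: "sorted_wrt (\<lambda>x y. ?leQ x y \<and> x \<noteq> y) zs" and zsQ: "set zs \<subseteq> ?Q"
    using hat_form[OF ys] by blast
  have zQ: "fst u \<in> A \<and> snd u \<in> ?T \<and> length (snd u) \<le> rank A le (fst u)" if "u \<in> set zs" for u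
    using zsQ that by (auto simp: rees_carrier_def rank_T)
  have lt: "?leQ (zs!i) (zs!j) \<and> zs!i \<noteq> zs!j" if "i < j" "j < length zs" for i j
    using zs_s that by (simp add: sorted_wrt_iff_nth_less)
  have cmpz: "?leQ u v \<or> ?leQ v u" if "u \<in> set zs" "v \<in> set zs" "u \<noteq> v" for u v
    using sorted_cmp[OF zs_s that] by blast
  have leQz: "le (fst u) (fst v) \<and> prefix (snd u) (snd v) \<and>
      int (rank A le (fst v)) - int (rank A le (fst u)) \<ge> int (length (snd v)) - int (length (snd u))"
    if "u \<in> set zs" "v \<in> set zs" "?leQ u v" for u v
    using zQ[OF that(1)] zQ[OF that(2)] that(3) by (simp add: rees_le_def rank_T)
  define C where "C = map fst zs"
  define fs where "fs = map snd zs"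
  have zip: "zip C fs = zs" by (simp add: C_def fs_def zip_map_fst_snd)
  have Cs: "sorted_wrt (\<lambda>x y. le x y \<and> x \<noteq> y) C"
    unfolding C_def sorted_wrt_map
  proof (rule sorted_wrt_mono_rel[OF _ zs_s])
    fix u v assume uv: "u \<in> set zs" "v \<in> set zs" "?leQ u v \<and> u \<noteq> v"
    have "fst u \<noteq> fst v" using samefst[of A le t n u v] uv zQ[OF uv(1)] zQ[OF uv(2)] by blast
    then show "le (fst u) (fst v) \<and> fst u \<noteq> fst v" using leQz[OF uv(1,2)] uv(3) by blast
  qed
  have CA: "set C \<subseteq> A" using zQ by (auto simp: C_def)
  have Cmax: "is_maximal_chain A le (set C)"
  proof (rule ccontr)
    assume nm: "\<not> is_maximal_chain A le (set C)"
    have Cch: "is_chain A le (set C)" using sorted_chain[OF Cs CA] prefl[OF fin po sp] by blast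
    then obtain D0 where D0: "is_chain A le D0" "set C \<subseteq> D0" "D0 \<noteq> set C"
      using nm unfolding is_maximal_chain_def by blast
    then obtain z where zD0: "z \<in> D0" "z \<notin> set C" by blast
    obtain D where D: "is_maximal_chain A le D" "D0 \<subseteq> D" using extend_maxchain[OF fin D0(1)] by blast
    have zD: "z \<in> D" and CD: "set C \<subseteq> D" using D D0 zD0 by auto
    have DA: "D \<subseteq> A" and Dc: "\<forall>a\<in>D. \<forall>b\<in>D. le a b \<or> le b a"
      using D by (auto simp: is_maximal_chain_def is_chain_def)
    have zA: "z \<in> A" using DA zD by auto
    define rz where "rz = rank A le z"
    define F where "F = (if zs = [] then [] else snd (last zs))"
    have Fpre: "prefix (snd u) F" if u: "u \<in> set zs" for u
    proof -
      have ne: "zs \<noteq> []" using u by auto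
      obtain i where i: "i < length zs" "u = zs!i" using u by (auto simp: in_set_conv_nth)
      have lz: "last zs = zs!(length zs - 1)" using last_conv_nth[OF ne] .
      show ?thesis
      proof (cases "i = length zs - 1")
        case True then show ?thesis using i lz ne by (simp add: F_def)
      next
        case False
        then have "?leQ (zs!i) (zs!(length zs - 1))" using lt[of i "length zs - 1"] i by auto
        then show ?thesis using i lz ne by (simp add: F_def rees_le_def)
      qed
    qed
    have FT: "set F \<subseteq> {1..t}"
    proof (cases "zs = []")
      case True then show ?thesis by (simp add: F_def)
    next
      case False
      then have "last zs \<in> set zs" by simp
      then show ?thesis using zQ False by (auto simp: F_def tree_T_def)
    qed
    define S where "S = insert rz ((\<lambda>u. length (snd u) + (rz - rank A le (fst u))) ` set zs)"
    define k where "k = Min S"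
    have fS: "finite S" "S \<noteq> {}" by (auto simp: S_def)
    have krz: "k \<le> rz" unfolding k_def using fS by (simp add: S_def)
    have kterm: "k \<le> length (snd u) + (rz - rank A le (fst u))" if "u \<in> set zs" for u
      unfolding k_def using fS that by (intro Min_le) (auto simp: S_def)
    have kge: "m \<le> k" if "m \<le> rz" "\<And>u. u \<in> set zs \<Longrightarrow> m \<le> length (snd u) + (rz - rank A le (fst u))" for m
      unfolding k_def using fS that by (auto simp: S_def)
    define L where "L = F @ replicate rz 1"
    define g where "g = take k L"
    have lg: "length g = k" using krz by (simp add: g_def L_def)
    have preL: "prefix (snd u) L" if "u \<in> set zs" for u
      using Fpre[OF that] by (auto simp: L_def prefix_def)
    have rnk: "(le (fst u) z \<and> rank A le (fst u) < rz) \<or> (le z (fst u) \<and> rz < rank A le (fst u))"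
      if u: "u \<in> set zs" for u
    proof -
      have fu: "fst u \<in> D" "fst u \<noteq> z" using u CD zD0 by (auto simp: C_def)
      then have "le (fst u) z \<or> le z (fst u)" using Dc zD by blast
      then show ?thesis using rank_strict[OF fin po sp D(1)] fu zD unfolding rz_def by metis
    qed
    have rzn: "rz \<le> n" unfolding rz_def using rank_le_n[OF fin po sp pl D(1) zD] .
    have gT: "g \<in> ?T"
    proof -
      have "set g \<subseteq> set L" unfolding g_def by (rule set_take_subset)
      also have "\<dots> \<subseteq> {1..t}" using FT t1 by (auto simp: L_def)
      finally show ?thesis using lg krz rzn by (simp add: tree_T_def)
    qed
    have wQ: "(z, g) \<in> ?Q" using zA gT lg krz by (simp add: rees_carrier_def rank_T rz_def)
    have cmpw: "?leQ u (z, g) \<or> ?leQ (z, g) u" if u: "u \<in> set zs" for u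
    proof -
      obtain x f where uxf: "u = (x, f)" by (cases u)
      have fT: "f \<in> ?T" and lfx: "length f \<le> rank A le x" using zQ[OF u] uxf by auto
      have rkf: "rank ?T prefix f = length f" using rank_T[OF fT] .
      have rkg: "rank ?T prefix g = k" using rank_T[OF gT] lg by simp
      have oth: "\<And>v. v \<in> set zs \<Longrightarrow> v \<noteq> u \<Longrightarrow>
          length f \<le> length (snd v) \<or>
          int (rank A le x) - int (rank A le (fst v)) \<ge> int (length f) - int (length (snd v))"
      proof -
        fix v assume v: "v \<in> set zs" "v \<noteq> u"
        then have "?leQ u v \<or> ?leQ v u" using cmpz u by blast
        then show "length f \<le> length (snd v) \<or>
          int (rank A le x) - int (rank A le (fst v)) \<ge> int (length f) - int (length (snd v))"
          using leQz[OF u v(1)] leQz[OF v(1) u] uxf by (auto dest: prefix_length_le)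
      qed
      from rnk[OF u] show ?thesis
      proof
        assume c: "le (fst u) z \<and> rank A le (fst u) < rz"
        have "length f \<le> k"
        proof (rule kge)
          show "length f \<le> rz" using lfx c uxf by simp
          fix v assume v: "v \<in> set zs"
          show "length f \<le> length (snd v) + (rz - rank A le (fst v))"
          proof (cases "v = u")
            case True then show ?thesis using uxf by simp
          next
            case False
            have "int (rz - rank A le (fst v)) \<ge> int rz - int (rank A le (fst v))" by (rule int_diff_ge)
            moreover have "rank A le x < rz" using c uxf by simp
            ultimately show ?thesis using oth[OF v False] by linarith
          qed
        qed
        moreover have "k \<le> length f + (rz - rank A le x)" using kterm[OF u] uxf by simp
        ultimately have "?leQ u (z, g)"
          using c uxf prefix_take_mono[OF preL[OF u]] rkf rkg unfolding g_def
          by (simp add: rees_le_def rz_def, arith)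
        then show ?thesis by blast
      next
        assume c: "le z (fst u) \<and> rz < rank A le (fst u)"
        have kf: "k \<le> length f" using kterm[OF u] uxf c by simp
        have pg: "prefix g f" unfolding g_def
          using take_prefix_eq[OF preL[OF u] ] kf uxf by (simp add: take_is_prefix)
        have "length f - (rank A le x - rz) \<le> k"
        proof (rule kge)
          show "length f - (rank A le x - rz) \<le> rz" using lfx c uxf by simp
          fix v assume v: "v \<in> set zs"
          show "length f - (rank A le x - rz) \<le> length (snd v) + (rz - rank A le (fst v))"
          proof (cases "v = u")
            case True then show ?thesis using uxf by simp
          next
            case False
            have "int (rz - rank A le (fst v)) \<ge> int rz - int (rank A le (fst v))" by (rule int_diff_ge)
            moreover have "rz < rank A le x" "length f \<le> rank A le x" using c uxf lfx by simp_all
            ultimately show ?thesis using oth[OF v False] by linarith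
          qed
        qed
        then have "?leQ (z, g) u"
          using c uxf pg rkf rkg by (simp add: rees_le_def rz_def)
        then show ?thesis by blast
      qed
    qed
    have ch: "is_chain (hat_carrier ?Q) (hat_le ?leQ) (insert (Elem (z, g)) (set ys))"
    proof -
      have M: "is_maximal_chain (hat_carrier ?Q) (hat_le ?leQ) (set ys)" using ys by (simp add: maxchain_list_def)
      then have sH: "set ys \<subseteq> hat_carrier ?Q" and cc: "\<forall>a\<in>set ys. \<forall>b\<in>set ys. hat_le ?leQ a b \<or> hat_le ?leQ b a"
        by (auto simp: is_maximal_chain_def is_chain_def)
      have "hat_le ?leQ a (Elem (z, g)) \<or> hat_le ?leQ (Elem (z, g)) a" if "a \<in> set ys" for a
        using that unfolding ys_eq by (auto dest: cmpw)
      moreover have "hat_le ?leQ (Elem (z, g)) (Elem (z, g))"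
        using zA prefl[OF fin po sp] by (simp add: rees_le_def)
      ultimately show ?thesis using sH cc wQ unfolding is_chain_def hat_carrier_def by blast
    qed
    have "Elem (z, g) \<notin> set ys" using zD0(2) unfolding ys_eq C_def by force
    then show False using ch ys unfolding maxchain_list_def is_maximal_chain_def by blast
  qed
  have Cml: "maxchain_list A le C" using Cs Cmax by (simp add: maxchain_list_def)
  have steps: "prefix (fs!i) (fs!Suc i) \<and> length (fs!Suc i) \<le> Suc (length (fs!i))" if i: "Suc i < length C" for i
  proof -
    have l: "Suc i < length zs" using i by (simp add: C_def)
    have "?leQ (zs!i) (zs!Suc i)" using lt[of i "Suc i"] l by simp
    then have h: "prefix (snd (zs!i)) (snd (zs!Suc i)) \<and>
      int (rank A le (fst (zs!Suc i))) - int (rank A le (fst (zs!i))) \<ge> int (length (snd (zs!Suc i))) - int (length (snd (zs!i)))"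
      using leQz l by (meson nth_mem Suc_lessD)
    have "rank A le (C!i) = i" "rank A le (C!Suc i) = Suc i"
      using rank_list[OF fin po sp Cml] i by auto
    then show ?thesis using h l by (simp add: C_def fs_def)
  qed
  have "length fs = length C" by (simp add: C_def fs_def)
  then show ?thesis using Cml steps ys_eq zip by metis
qed


lemma A_nonempty: "A \<noteq> {}"
  using pl unfolding poset_length_def is_chain_def by fastforce

lemma C_nonempty: "maxchain_list A le C \<Longrightarrow> C \<noteq> []"
proof
  assume "maxchain_list A le C" "C = []"
  then have M: "is_maximal_chain A le {}" by (simp add: maxchain_list_def)
  obtain a where a: "a \<in> A" using A_nonempty by blast
  have "is_chain A le {a}" using a prefl[OF fin po sp a] by (simp add: is_chain_def)
  then show False using M unfolding is_maximal_chain_def by blast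
qed

lemma C_len: "maxchain_list A le C \<Longrightarrow> length C \<le> n + 1"
proof -
  assume C: "maxchain_list A le C"
  then have "distinct C" by (auto simp: maxchain_list_def intro: sw_distinct)
  moreover have "card (set C) \<le> n + 1"
    using C pl by (auto simp: maxchain_list_def is_maximal_chain_def poset_length_def)
  ultimately show ?thesis by (simp add: distinct_card)
qed

lemma B_maxchain:
  assumes C: "maxchain_list A le C" and d: "length d = length C - 1" "set d \<subseteq> {0,1}"
    and g: "set g \<subseteq> {1..t}" "length g = sum_list d"
  shows "maxchain_list (hat_carrier (rees_carrier A le (tree_T t n) prefix))
                 (hat_le (rees_le A le (tree_T t n) prefix)) (mkch C d g)"
proof -
  let ?T = "tree_T t n"
  let ?Q = "rees_carrier A le ?T prefix"
  let ?leQ = "rees_le A le ?T prefix"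
  let ?H = "hat_carrier ?Q"
  let ?leH = "hat_le ?leQ"
  define fs where "fs = fsq d (length C) g"
  define zs where "zs = zip C fs"
  have Cs: "sorted_wrt (\<lambda>x y. le x y \<and> x \<noteq> y) C" and Cmax: "is_maximal_chain A le (set C)"
    using C by (auto simp: maxchain_list_def)
  have CA: "set C \<subseteq> A" using Cmax by (auto simp: is_maximal_chain_def is_chain_def)
  have lfs: "length fs = length C" by (simp add: fs_def fsq_def)
  have lzs: "length zs = length C" by (simp add: zs_def lfs)
  have zsi: "zs!i = (C!i, take (sseq d i) g)" if "i < length C" for i
    using that by (simp add: zs_def fs_def fsq_def lfs)
  have lti: "length (take (sseq d i) g) = sseq d i" for i
    using sseq_le_sum[of d i] g(2) by simp
  have Cn: "length C \<le> n + 1" using C_len[OF C] .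
  have inT: "take (sseq d i) g \<in> ?T" if "i < length C" for i
  proof -
    have "set (take (sseq d i) g) \<subseteq> {1..t}" using g(1) by (meson set_take_subset subset_trans)
    moreover have "sseq d i \<le> n" using sseq_le[OF d(2), of i] that Cn by linarith
    ultimately show ?thesis by (simp add: tree_T_def lti)
  qed
  have rk: "rank A le (C!i) = i" if "i < length C" for i using rank_list[OF fin po sp C that] .
  have inQ: "zs!i \<in> ?Q" if "i < length C" for i
    using zsi[OF that] inT[OF that] CA that rk[OF that] sseq_le[OF d(2), of i]
    by (simp add: rees_carrier_def rank_T lti subset_iff)
  have zs_s: "sorted_wrt (\<lambda>x y. ?leQ x y \<and> x \<noteq> y) zs"
    unfolding sorted_wrt_iff_nth_less
  proof (intro allI impI)
    fix i j assume ij: "i < j" "j < length zs"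
    then have i: "i < length C" and j: "j < length C" using lzs by auto
    have cij: "le (C!i) (C!j)" "C!i \<noteq> C!j" using Cs ij j by (auto simp: sorted_wrt_iff_nth_less)
    have sm: "sseq d i \<le> sseq d j" "sseq d j \<le> sseq d i + (j - i)" using sseq_mono[OF d(2), of i j] ij by auto
    have "?leQ (zs!i) (zs!j)"
      using zsi[OF i] zsi[OF j] cij rk[OF i] rk[OF j] sm inT[OF i] inT[OF j] ij
      by (simp add: rees_le_def rank_T lti prefix_take_take)
    moreover have "zs!i \<noteq> zs!j" using zsi[OF i] zsi[OF j] cij by simp
    ultimately show "?leQ (zs!i) (zs!j) \<and> zs!i \<noteq> zs!j" by simp
  qed
  have ys: "mkch C d g = [Bot] @ map Elem zs @ [Top]" by (simp add: mkch_def zs_def fs_def)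
  have topI: "hat_le leQ y Top" for leQ and y :: "'b hat" by (cases y) auto
  have srt: "sorted_wrt (\<lambda>x y. ?leH x y \<and> x \<noteq> y) (mkch C d g)"
    unfolding ys using zs_s by (simp add: sorted_wrt_append sorted_wrt_map)
  have setz: "set zs \<subseteq> ?Q"
  proof
    fix x assume "x \<in> set zs"
    then obtain i where "i < length zs" "x = zs!i" by (auto simp: in_set_conv_nth)
    then show "x \<in> ?Q" using inQ lzs by simp
  qed
  have sH: "set (mkch C d g) \<subseteq> ?H" unfolding ys using setz by (auto simp: hat_carrier_def)
  have chain: "is_chain ?H ?leH (set (mkch C d g))"
  proof -
    have "\<forall>x\<in>?H. ?leH x x"
    proof
      fix x assume x: "x \<in> ?H"
      show "?leH x x"
      proof (cases x)
        case (Elem u)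
        then have "fst u \<in> A" using x by (auto simp: hat_carrier_def rees_carrier_def)
        then show ?thesis using Elem prefl[OF fin po sp] by (simp add: rees_le_def)
      qed auto
    qed
    then show ?thesis by (rule sorted_chain[OF srt sH])
  qed
  have "is_maximal_chain ?H ?leH (set (mkch C d g))"
    unfolding is_maximal_chain_def
  proof (intro conjI allI impI)
    show "is_chain ?H ?leH (set (mkch C d g))" by fact
    fix D assume D: "is_chain ?H ?leH D \<and> set (mkch C d g) \<subseteq> D"
    have DH: "D \<subseteq> ?H" and Dc: "\<forall>a\<in>D. \<forall>b\<in>D. ?leH a b \<or> ?leH b a" using D by (auto simp: is_chain_def)
    have "w \<in> set (mkch C d g)" if w: "w \<in> D" for w
    proof (cases w)
      case Bot then show ?thesis by (simp add: ys)
    next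
      case Top then show ?thesis by (simp add: ys)
    next
      case (Elem ph)
      obtain p h where ph: "ph = (p, h)" by (cases ph)
      have phQ: "(p, h) \<in> ?Q" using w DH Elem ph by (auto simp: hat_carrier_def)
      then have pA: "p \<in> A" and hT: "h \<in> ?T" by (auto simp: rees_carrier_def)
      have cmp: "?leQ (zs!i) (p,h) \<or> ?leQ (p,h) (zs!i)" if i: "i < length C" for i
      proof -
        have "zs!i \<in> set zs" using i lzs by simp
        then have "Elem (zs!i) \<in> set (mkch C d g)" unfolding ys by simp
        then have "Elem (zs!i) \<in> D" using D by blast
        then have "?leH (Elem (zs!i)) w \<or> ?leH w (Elem (zs!i))" using Dc w by blast
        then show ?thesis using Elem ph by simp
      qed
      have "is_chain A le (insert p (set C))"
      proof -
        have cp: "le c p \<or> le p c" if cin: "c \<in> set C" for c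
        proof -
          obtain i where i0: "i < length C" "C!i = c" using cin by (auto simp: in_set_conv_nth)
          have hh: "?leQ (zs!i) (p,h) \<or> ?leQ (p,h) (zs!i)" by (rule cmp[OF i0(1)])
          have e: "fst (zs!i) = c" using zsi[OF i0(1)] i0(2) by simp
          from hh show ?thesis
          proof
            assume "?leQ (zs!i) (p,h)"
            then have "le (fst (zs!i)) p" unfolding rees_le_def by simp
            then show ?thesis using e by simp
          next
            assume "?leQ (p,h) (zs!i)"
            then have "le p (fst (zs!i))" unfolding rees_le_def by simp
            then show ?thesis using e by simp
          qed
        qed
        have sub: "insert p (set C) \<subseteq> A" using CA pA by simp
        have Cc: "\<forall>a\<in>set C. \<forall>b\<in>set C. le a b \<or> le b a"
          using Cmax unfolding is_maximal_chain_def is_chain_def by blast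
        have "\<forall>a\<in>insert p (set C). \<forall>b\<in>insert p (set C). le a b \<or> le b a"
          using Cc cp prefl[OF fin po sp pA] by blast
        then show ?thesis using sub unfolding is_chain_def by blast
      qed
      then have "insert p (set C) = set C" using Cmax unfolding is_maximal_chain_def by blast
      then have "p \<in> set C" by blast
      then obtain i where i0: "i < length C" "C!i = p" by (auto simp: in_set_conv_nth)
      then have i: "i < length C" "p = C!i" by simp_all
      have "zs!i = (p, h) \<or> (p, h) = zs!i"
        using cmp[OF i(1)] zsi[OF i(1)] i samefst[of A le t n "zs!i" "(p,h)"] samefst[of A le t n "(p,h)" "zs!i"]
          inT[OF i(1)] hT by auto
      then have "Elem (zs!i) = w" using Elem ph by auto
      then show ?thesis using i lzs unfolding ys by (metis in_set_conv_nth UnCI set_append set_map imageI list.set_intros(2) append_Cons append_Nil)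
    qed
    then show "D = set (mkch C d g)" using D by blast
  qed
  then show ?thesis using srt by (simp add: maxchain_list_def)
qed


lemma block_image:
  assumes C: "maxchain_list A le C" and d: "length d = length C - 1" "set d \<subseteq> {0,1}"
  shows "block A le t n C d = mkch C d ` {g. set g \<subseteq> {1..t} \<and> length g = sum_list d}"
proof (rule set_eqI, rule iffI)
  let ?T = "tree_T t n"
  let ?Q = "rees_carrier A le ?T prefix"
  let ?leQ = "rees_le A le ?T prefix"
  let ?H = "hat_carrier ?Q"
  let ?leH = "hat_le ?leQ"
  fix ys assume "ys \<in> block A le t n C d"
  then obtain fs where ys: "maxchain_list ?H ?leH ys" and lfs: "length fs = length C"
    and ye: "ys = [Bot] @ map Elem (zip C fs) @ [Top]"
    and df: "\<forall>i\<in>{1..<length C}. int (length (fs ! i)) - int (length (fs ! (i - 1))) = int (d ! (i - 1))"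
    unfolding block_def by blast
  define zs where "zs = zip C fs"
  have lzs: "length zs = length C" by (simp add: zs_def lfs)
  have zsi: "zs!i = (C!i, fs!i)" if "i < length C" for i using that lfs by (simp add: zs_def)
  have srt: "sorted_wrt (\<lambda>x y. ?leH x y \<and> x \<noteq> y) ys" and M: "is_maximal_chain ?H ?leH (set ys)"
    using ys by (auto simp: maxchain_list_def)
  have sH: "set ys \<subseteq> ?H" using M by (simp add: is_maximal_chain_def is_chain_def)
  have "sorted_wrt (\<lambda>x y. ?leH x y \<and> x \<noteq> y) (map Elem zs)"
    using srt unfolding ye zs_def by (simp add: sorted_wrt_append)
  then have zs_s: "sorted_wrt (\<lambda>x y. ?leQ x y \<and> x \<noteq> y) zs" by (simp add: sorted_wrt_map)
  have zQ: "zs!i \<in> ?Q" if i: "i < length C" for i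
  proof -
    have "zs!i \<in> set zs" using i lzs by simp
    then have "Elem (zs!i) \<in> set ys" unfolding ye zs_def by simp
    then have "Elem (zs!i) \<in> ?H" using sH by blast
    then show ?thesis by (auto simp: hat_carrier_def)
  qed
  have fT: "fs!i \<in> ?T" and fr: "length (fs!i) \<le> i" if i: "i < length C" for i
  proof -
    have "(C!i, fs!i) \<in> ?Q" using zQ[OF i] zsi[OF i] by simp
    then show "fs!i \<in> ?T" "length (fs!i) \<le> i"
      using rank_list[OF fin po sp C i] by (auto simp: rees_carrier_def rank_T)
  qed
  have lt: "?leQ (zs!i) (zs!j)" if "i < j" "j < length C" for i j
    using zs_s that lzs by (simp add: sorted_wrt_iff_nth_less)
  have Cne: "C \<noteq> []" using C_nonempty[OF C] .
  define m where "m = length C"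
  have m1: "m \<ge> 1" using Cne by (simp add: m_def Suc_le_eq)
  have len: "length (fs!i) = sseq d i" if "i < m" for i
    using that
  proof (induction i)
    case 0 then show ?case using fr[of 0] by (simp add: m_def sseq_def)
  next
    case (Suc i)
    have "Suc i \<in> {1..<length C}" using Suc.prems by (simp add: m_def)
    then have "int (length (fs ! Suc i)) - int (length (fs ! i)) = int (d ! i)" using df by fastforce
    moreover have "sseq d (Suc i) = sseq d i + d!i" using Suc.prems d(1) by (simp add: m_def sseq_Suc)
    ultimately show ?case using Suc by simp
  qed
  define G where "G = fs!(m - 1)"
  have pG: "prefix (fs!i) G" if i: "i < m" for i
  proof (cases "i = m - 1")
    case True then show ?thesis by (simp add: G_def)
  next
    case False
    then have "?leQ (zs!i) (zs!(m-1))" using lt[of i "m - 1"] i m1 by (simp add: m_def)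
    then show ?thesis using zsi[of i] zsi[of "m - 1"] i m1 by (simp add: G_def rees_le_def m_def)
  qed
  have fseq: "fs = fsq d (length C) G"
  proof (rule nth_equalityI)
    show "length fs = length (fsq d (length C) G)" by (simp add: fsq_def lfs)
    fix i assume "i < length fs"
    then have i: "i < m" using lfs by (simp add: m_def)
    have "fs!i = take (length (fs!i)) G" using pG[OF i] by (auto simp: prefix_def)
    then show "fs!i = fsq d (length C) G ! i" using i len[OF i] by (simp add: fsq_def m_def)
  qed
  have GW: "set G \<subseteq> {1..t} \<and> length G = sum_list d"
  proof
    show "set G \<subseteq> {1..t}" using fT[of "m - 1"] m1 by (simp add: G_def tree_T_def m_def)
    have "length G = sseq d (m - 1)" using len[of "m - 1"] m1 by (simp add: G_def)
    also have "\<dots> = sum_list d" using d(1) by (simp add: sseq_all m_def)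
    finally show "length G = sum_list d" .
  qed
  have "ys = mkch C d G" unfolding mkch_def ye fseq[symmetric] ..
  then show "ys \<in> mkch C d ` {g. set g \<subseteq> {1..t} \<and> length g = sum_list d}" using GW by blast
next
  fix ys assume "ys \<in> mkch C d ` {g. set g \<subseteq> {1..t} \<and> length g = sum_list d}"
  then obtain g where g: "set g \<subseteq> {1..t}" "length g = sum_list d" and ye: "ys = mkch C d g" by blast
  define fs where "fs = fsq d (length C) g"
  have mc: "maxchain_list (hat_carrier (rees_carrier A le (tree_T t n) prefix))
                 (hat_le (rees_le A le (tree_T t n) prefix)) ys"
    unfolding ye by (rule B_maxchain[OF C d g])
  have lfs: "length fs = length C" by (simp add: fs_def fsq_def)
  have ylist: "ys = [Bot] @ map Elem (zip C fs) @ [Top]" by (simp add: ye mkch_def fs_def)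
  have lfi: "length (fs!i) = sseq d i" if "i < length C" for i
    using that sseq_le_sum[of d i] g(2) by (simp add: fs_def fsq_def)
  have df: "\<forall>i\<in>{1..<length C}. int (length (fs ! i)) - int (length (fs ! (i - 1))) = int (d ! (i - 1))"
  proof
    fix i assume i: "i \<in> {1..<length C}"
    then have "i - 1 < length d" using d(1) by auto
    then have "sseq d (Suc (i - 1)) = sseq d (i - 1) + d!(i - 1)" by (rule sseq_Suc)
    moreover have "Suc (i - 1) = i" using i by auto
    ultimately show "int (length (fs ! i)) - int (length (fs ! (i - 1))) = int (d ! (i - 1))"
      using lfi[of i] lfi[of "i - 1"] i by auto
  qed
  show "ys \<in> block A le t n C d" unfolding block_def using mc lfs ylist df by blast
qed

lemma mkch_inj:
  assumes C: "maxchain_list A le C" and d: "length d = length C - 1"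
  shows "inj_on (mkch C d) {g. set g \<subseteq> {1..t} \<and> length g = sum_list d}"
proof
  fix g1 g2 assume g1: "g1 \<in> {g. set g \<subseteq> {1..t} \<and> length g = sum_list d}"
    and g2: "g2 \<in> {g. set g \<subseteq> {1..t} \<and> length g = sum_list d}"
    and eq: "mkch C d g1 = mkch C d g2"
  have "map Elem (zip C (fsq d (length C) g1)) = map Elem (zip C (fsq d (length C) g2))"
    using eq by (simp add: mkch_def)
  then have "map unE (map Elem (zip C (fsq d (length C) g1))) = map unE (map Elem (zip C (fsq d (length C) g2)))"
    by simp
  then have "zip C (fsq d (length C) g1) = zip C (fsq d (length C) g2)" by (simp add: comp_def)
  then have "map snd (zip C (fsq d (length C) g1)) = map snd (zip C (fsq d (length C) g2))" by simp
  then have fe: "fsq d (length C) g1 = fsq d (length C) g2" by (simp add: fsq_def)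
  have Cne: "C \<noteq> []" using C_nonempty[OF C] .
  define m where "m = length C"
  have m1: "m - 1 < m" using Cne by (simp add: m_def)
  have "fsq d m g1 ! (m - 1) = fsq d m g2 ! (m - 1)" using fe by (simp add: m_def)
  then have "take (sseq d (m - 1)) g1 = take (sseq d (m - 1)) g2" using m1 by (simp add: fsq_def)
  moreover have "sseq d (m - 1) = sum_list d"
    using sseq_all[of d "m - 1"] d by (simp add: m_def)
  ultimately show "g1 = g2" using g1 g2 by simp
qed

lemma block_card:
  assumes C: "maxchain_list A le C" and d: "length d = length C - 1" "set d \<subseteq> {0,1}"
  shows "card (block A le t n C d) = t ^ sum_list d"
proof -
  have "card (block A le t n C d) = card {g. set g \<subseteq> {1..t} \<and> length g = sum_list d}"
    unfolding block_image[OF C d] by (rule card_image[OF mkch_inj[OF C d(1)]])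
  also have "\<dots> = t ^ sum_list d" using card_lists_length_eq[of "{1..t}" "sum_list d"] by simp
  finally show ?thesis .
qed

end


theorem proposition3p1:
  fixes A :: "'a set" and le :: "'a \<Rightarrow> 'a \<Rightarrow> bool" and n t :: nat
  assumes "finite A" and "is_poset A le" and "semipure A le" and "poset_length A le n"
    and "t \<ge> 1"
  shows "((\<Union>C\<in>{C. maxchain_list A le C}.
            \<Union>d\<in>{d. length d = length C - 1 \<and> set d \<subseteq> {0, 1}}. block A le t n C d)
         = {ys. maxchain_list (hat_carrier (rees_carrier A le (tree_T t n) prefix))
                              (hat_le (rees_le A le (tree_T t n) prefix)) ys})
    \<and> (\<forall>C C' d d'. maxchain_list A le C \<and> maxchain_list A le C' \<and>
            length d = length C - 1 \<and> set d \<subseteq> {0, 1} \<and>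
            length d' = length C' - 1 \<and> set d' \<subseteq> {0, 1} \<and> (C, d) \<noteq> (C', d') \<longrightarrow>
            block A le t n C d \<inter> block A le t n C' d' = {})
    \<and> (\<forall>C d. maxchain_list A le C \<and> length d = length C - 1 \<and> set d \<subseteq> {0, 1} \<longrightarrow>
            card (block A le t n C d) = t ^ sum_list d)"
proof (intro conjI allI impI)
  let ?H = "hat_carrier (rees_carrier A le (tree_T t n) prefix)"
  let ?leH = "hat_le (rees_le A le (tree_T t n) prefix)"
  show "(\<Union>C\<in>{C. maxchain_list A le C}.
            \<Union>d\<in>{d. length d = length C - 1 \<and> set d \<subseteq> {0, 1}}. block A le t n C d)
         = {ys. maxchain_list ?H ?leH ys}"
  proof (rule set_eqI, rule iffI)
    fix ys assume "ys \<in> (\<Union>C\<in>{C. maxchain_list A le C}.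
            \<Union>d\<in>{d. length d = length C - 1 \<and> set d \<subseteq> {0, 1}}. block A le t n C d)"
    then obtain C d where "ys \<in> block A le t n C d" by blast
    then show "ys \<in> {ys. maxchain_list ?H ?leH ys}" unfolding block_def by blast
  next
    fix ys assume "ys \<in> {ys. maxchain_list ?H ?leH ys}"
    then have ys: "maxchain_list ?H ?leH ys" by simp
    obtain C fs where lfs: "length fs = length C" and ye: "ys = [Bot] @ map Elem (zip C fs) @ [Top]"
      and C: "maxchain_list A le C"
      and st: "\<And>i. Suc i < length C \<Longrightarrow> prefix (fs!i) (fs!Suc i) \<and> length (fs!Suc i) \<le> Suc (length (fs!i))"
      using struct_A[OF assms ys] by blast
    define d where "d = map (\<lambda>i. length (fs!Suc i) - length (fs!i)) [0..<length C - 1]"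
    have ld: "length d = length C - 1" by (simp add: d_def)
    have sd: "set d \<subseteq> {0, 1}"
    proof
      fix x assume "x \<in> set d"
      then obtain i where i: "i < length C - 1" "x = length (fs!Suc i) - length (fs!i)"
        by (auto simp: d_def)
      then have "Suc i < length C" by simp
      then show "x \<in> {0, 1}" using st i by fastforce
    qed
    have df: "\<forall>i\<in>{1..<length C}. int (length (fs ! i)) - int (length (fs ! (i - 1))) = int (d ! (i - 1))"
    proof
      fix i assume i: "i \<in> {1..<length C}"
      then have si: "Suc (i - 1) = i" "Suc (i - 1) < length C" "i - 1 < length C - 1" by auto
      have "length (fs!(i - 1)) \<le> length (fs!i)" using st[OF si(2)] si(1) by (metis prefix_length_le)
      moreover have "d!(i - 1) = length (fs!i) - length (fs!(i - 1))" using si by (simp add: d_def)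
      ultimately show "int (length (fs ! i)) - int (length (fs ! (i - 1))) = int (d ! (i - 1))" by simp
    qed
    have "ys \<in> block A le t n C d" unfolding block_def using ys lfs ye df by blast
    then show "ys \<in> (\<Union>C\<in>{C. maxchain_list A le C}.
            \<Union>d\<in>{d. length d = length C - 1 \<and> set d \<subseteq> {0, 1}}. block A le t n C d)"
      using C ld sd by blast
  qed
next
  fix C C' :: "'a list" and d d' :: "nat list"
  assume h: "maxchain_list A le C \<and> maxchain_list A le C' \<and>
            length d = length C - 1 \<and> set d \<subseteq> {0, 1} \<and>
            length d' = length C' - 1 \<and> set d' \<subseteq> {0, 1} \<and> (C, d) \<noteq> (C', d')"
  show "block A le t n C d \<inter> block A le t n C' d' = {}"
  proof (rule ccontr)
    assume "block A le t n C d \<inter> block A le t n C' d' \<noteq> {}"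
    then obtain ys where y1: "ys \<in> block A le t n C d" and y2: "ys \<in> block A le t n C' d'" by blast
    obtain fs where lfs: "length fs = length C" and ye: "ys = [Bot] @ map Elem (zip C fs) @ [Top]"
      and df: "\<forall>i\<in>{1..<length C}. int (length (fs ! i)) - int (length (fs ! (i - 1))) = int (d ! (i - 1))"
      using y1 unfolding block_def by blast
    obtain fs' where lfs': "length fs' = length C'" and ye': "ys = [Bot] @ map Elem (zip C' fs') @ [Top]"
      and df': "\<forall>i\<in>{1..<length C'}. int (length (fs' ! i)) - int (length (fs' ! (i - 1))) = int (d' ! (i - 1))"
      using y2 unfolding block_def by blast
    have "map Elem (zip C fs) = map Elem (zip C' fs')" using ye ye' by simp
    then have "map unE (map Elem (zip C fs)) = map unE (map Elem (zip C' fs'))" by simp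
    then have z: "zip C fs = zip C' fs'" by (simp add: comp_def)
    have CC: "C = C'"
      using arg_cong[OF z, of "map fst"] lfs lfs' by simp
    have FF: "fs = fs'"
      using arg_cong[OF z, of "map snd"] lfs lfs' by simp
    have "d = d'"
    proof (rule nth_equalityI)
      show "length d = length d'" using h CC by simp
      fix i assume i: "i < length d"
      then have "Suc i \<in> {1..<length C}" using h by auto
      then have "int (d!i) = int (d'!i)" using df df' CC FF by fastforce
      then show "d!i = d'!i" by simp
    qed
    then show False using h CC by simp
  qed
next
  fix C :: "'a list" and d :: "nat list"
  assume h: "maxchain_list A le C \<and> length d = length C - 1 \<and> set d \<subseteq> {0, 1}"
  then show "card (block A le t n C d) = t ^ sum_list d"
    using block_card[OF assms] by blast
qed

end
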